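(* Let $P$ be a three-dimensional zonotope which is not a prism, and let $E$ be an edge of $P$ with $\#B(E)=10$. Then there exists an edge $M$ of $P$ not parallel to $E$ with $\#B(M)\ge 8$.
   Context: A zonotope is a Minkowski sum of finitely many segments. For an edge $E$ of a three-dimensional zonotope $P$, the belt $B(E)$ is the set of facets of $P$ containing a translate of $E$ as an edge, and $\#B(E)$ is the number of facets in it. A prism (cylinder) is a set $Q+S$ with $Q$ a convex polygon and $S$ a segment not parallel to the plane of $Q$. *)

theory Defs
  imports "HOL-Analysis.Analysis"
begin

definition msum :: "'a::euclidean_space set \<Rightarrow> 'a set \<Rightarrow> 'a set" where
  "msum A B = {x + y | x y. x \<in> A \<and> y \<in> B}"

definition segsum :: "('a::euclidean_space \<times> 'a) list \<Rightarrow> 'a set" where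
  "segsum segs = foldr (\<lambda>(a, b) S. msum (closed_segment a b) S) segs {0}"

definition zonotope :: "'a::euclidean_space set \<Rightarrow> bool" where
  "zonotope P \<longleftrightarrow> (\<exists>segs. P = segsum segs)"

definition dirspace :: "'a::euclidean_space set \<Rightarrow> 'a set" where
  "dirspace S = span {x - y | x y. x \<in> S \<and> y \<in> S}"

definition prism :: "'a::euclidean_space set \<Rightarrow> bool" where
  "prism P \<longleftrightarrow> (\<exists>Q a b. polytope Q \<and> aff_dim Q = 2 \<and> b - a \<notin> dirspace Q
                        \<and> P = msum Q (closed_segment a b))"

definition belt :: "'a::euclidean_space set \<Rightarrow> 'a set \<Rightarrow> 'a set set" where
  "belt P E = {F. F facet_of P \<and> (\<exists>t. ((\<lambda>x. t + x) ` E) edge_of F)}"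

definition parallel_sets :: "'a::euclidean_space set \<Rightarrow> 'a set \<Rightarrow> bool" where
  "parallel_sets E M \<longleftrightarrow> dirspace E = dirspace M"

end

theory Submission
  imports Defs
begin


definition ZS :: "real^3 \<Rightarrow> (real^3) list \<Rightarrow> (real^3) set" where
  "ZS z0 vs = {z0 + (\<Sum>i<length vs. t i *\<^sub>R vs!i) | t. \<forall>i<length vs. 0 \<le> t i \<and> t i \<le> 1}"

lemma msum_eq: "msum A B = A + B"
  unfolding msum_def set_plus_def by auto

lemma segsum_Cons: "segsum ((a,b)#segs) = closed_segment a b + segsum segs"
  by (simp add: segsum_def msum_eq)

lemma segsum_Nil: "segsum [] = {0}"
  by (simp add: segsum_def)

lemma closed_segment_alt: "closed_segment a b = {a + u *\<^sub>R (b - a) | u. 0 \<le> u \<and> u \<le> 1}"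
  by (simp add: segment_convex_hull convex_hull_2_alt)

lemma segsum_ZS:
  "segsum segs = ZS (sum_list (map fst segs)) (map (\<lambda>(a,b). b - a) segs)"
proof (induction segs)
  case Nil
  then show ?case by (simp add: segsum_Nil ZS_def)
next
  case (Cons s segs)
  obtain a b where s: "s = (a,b)" by fastforce
  define z where "z = sum_list (map fst segs)"
  define vs where "vs = map (\<lambda>(a,b). b - a) segs"
  have IH: "segsum segs = ZS z vs" using Cons z_def vs_def by simp
  have eq: "(\<Sum>i<Suc (length vs). t i *\<^sub>R ((b-a)#vs)!i) = t 0 *\<^sub>R (b-a) + (\<Sum>i<length vs. t (Suc i) *\<^sub>R vs!i)" for t
    by (subst sum.lessThan_Suc_shift) simp
  have "closed_segment a b + ZS z vs = ZS (a + z) ((b-a)#vs)"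
  proof (rule set_eqI, rule iffI)
    fix x assume "x \<in> closed_segment a b + ZS z vs"
    then obtain u t where u: "0 \<le> u" "u \<le> 1" and t: "\<forall>i<length vs. 0 \<le> t i \<and> t i \<le> 1"
      and x: "x = (a + u *\<^sub>R (b - a)) + (z + (\<Sum>i<length vs. t i *\<^sub>R vs!i))"
      unfolding closed_segment_alt ZS_def set_plus_def by blast
    define t' where "t' = case_nat u t"
    have "\<forall>i<length ((b-a)#vs). 0 \<le> t' i \<and> t' i \<le> 1"
      using u t by (auto simp: t'_def split: nat.splits)
    moreover have "x = (a + z) + (\<Sum>i<length ((b-a)#vs). t' i *\<^sub>R ((b-a)#vs)!i)"
    proof -
      have h: "(\<Sum>i<length ((b-a)#vs). t' i *\<^sub>R ((b-a)#vs)!i) = u *\<^sub>R (b-a) + (\<Sum>i<length vs. t i *\<^sub>R vs!i)"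
        using eq[of t'] by (simp only: length_Cons) (simp add: t'_def)
      show ?thesis by (subst h) (simp add: x algebra_simps)
    qed
    ultimately show "x \<in> ZS (a + z) ((b-a)#vs)" unfolding ZS_def by blast
  next
    fix x assume "x \<in> ZS (a + z) ((b-a)#vs)"
    then obtain t where t: "\<forall>i<Suc (length vs). 0 \<le> t i \<and> t i \<le> 1"
      and x: "x = (a + z) + (\<Sum>i<Suc (length vs). t i *\<^sub>R ((b-a)#vs)!i)"
      unfolding ZS_def by auto
    have "a + t 0 *\<^sub>R (b - a) \<in> closed_segment a b"
      using t unfolding closed_segment_alt by auto
    moreover have "z + (\<Sum>i<length vs. t (Suc i) *\<^sub>R vs!i) \<in> ZS z vs"
      using t unfolding ZS_def by auto
    moreover have "x = (a + t 0 *\<^sub>R (b - a)) + (z + (\<Sum>i<length vs. t (Suc i) *\<^sub>R vs!i))"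
      using x eq[of t] by (simp add: algebra_simps)
    ultimately show "x \<in> closed_segment a b + ZS z vs"
      unfolding set_plus_def by blast
  qed
  then show ?case using IH s by (simp add: segsum_Cons z_def vs_def)
qed

lemma polytope_plus:
  assumes "polytope S" "polytope T" shows "polytope (S + T)"
proof -
  obtain s t where "finite s" "S = convex hull s" "finite t" "T = convex hull t"
    using assms unfolding polytope_def by blast
  then show ?thesis unfolding polytope_def
    by (metis convex_hull_set_plus finite_set_plus)
qed

lemma polytope_segsum: "polytope (segsum segs)"
proof (induction segs)
  case Nil then show ?case by (simp add: segsum_Nil polytope_sing)
next
  case (Cons s segs)
  then show ?case
    by (cases s) (simp add: segsum_Cons polytope_plus segment_convex_hull polytope_convex_hull)
qed

lemma segsum_filter:
  "segsum segs = segsum (filter p segs) + segsum (filter (\<lambda>x. \<not> p x) segs)"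
proof (induction segs)
  case Nil then show ?case by (simp add: segsum_Nil)
next
  case (Cons s segs)
  obtain a b where s: "s = (a,b)" by fastforce
  show ?case using Cons s by (simp add: segsum_Cons add_ac)
qed



definition fc :: "(real^3) set \<Rightarrow> real^3 \<Rightarrow> (real^3) set" where
  "fc P c = {x\<in>P. \<forall>y\<in>P. c \<bullet> y \<le> c \<bullet> x}"

definition Wsp :: "(real^3) list \<Rightarrow> real^3 \<Rightarrow> (real^3) set" where
  "Wsp vs c = span {v \<in> set vs. c \<bullet> v = 0}"

definition xst :: "real^3 \<Rightarrow> (real^3) list \<Rightarrow> real^3 \<Rightarrow> real^3" where
  "xst z0 vs c = z0 + (\<Sum>i<length vs. (if c \<bullet> vs!i > 0 then 1 else 0) *\<^sub>R vs!i)"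

definition mx :: "real^3 \<Rightarrow> (real^3) list \<Rightarrow> real^3 \<Rightarrow> real" where
  "mx z0 vs c = c \<bullet> z0 + (\<Sum>i<length vs. max 0 (c \<bullet> vs!i))"

lemma inner_rep: "c \<bullet> (z0 + (\<Sum>i<n. t i *\<^sub>R v i)) = c \<bullet> z0 + (\<Sum>i<n. t i * (c \<bullet> v i))"
  by (simp add: inner_add_right inner_sum_right)

lemma ZS_le_mx: assumes "x \<in> ZS z0 vs" shows "c \<bullet> x \<le> mx z0 vs c"
proof -
  obtain t where t: "\<forall>i<length vs. 0 \<le> t i \<and> t i \<le> 1" and x: "x = z0 + (\<Sum>i<length vs. t i *\<^sub>R vs!i)"
    using assms unfolding ZS_def by blast
  have "t i * (c \<bullet> vs!i) \<le> max 0 (c \<bullet> vs!i)" if "i < length vs" for i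
  proof -
    have "0 \<le> t i" "t i \<le> 1" using t that by auto
    then show ?thesis
      by (cases "c \<bullet> vs!i \<ge> 0") (auto simp: max_def mult_left_le_one_le mult_nonneg_nonpos)
  qed
  then show ?thesis unfolding x inner_rep mx_def by (auto intro!: sum_mono)
qed

lemma xst_in: "xst z0 vs c \<in> ZS z0 vs"
  unfolding xst_def ZS_def by force

lemma xst_val: "c \<bullet> xst z0 vs c = mx z0 vs c"
  unfolding xst_def mx_def inner_rep
  by (intro arg_cong2[where f="(+)"] refl sum.cong) auto

lemma fc_eq_hyper: "fc (ZS z0 vs) c = ZS z0 vs \<inter> {x. c \<bullet> x = mx z0 vs c}"
proof -
  have "x \<in> fc (ZS z0 vs) c \<longleftrightarrow> x \<in> ZS z0 vs \<and> c \<bullet> x = mx z0 vs c" for x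
  proof
    assume "x \<in> fc (ZS z0 vs) c"
    then have "x \<in> ZS z0 vs" "c \<bullet> xst z0 vs c \<le> c \<bullet> x" using xst_in unfolding fc_def by auto
    then show "x \<in> ZS z0 vs \<and> c \<bullet> x = mx z0 vs c" using ZS_le_mx[of x z0 vs c] xst_val[of c z0 vs] by auto
  next
    assume "x \<in> ZS z0 vs \<and> c \<bullet> x = mx z0 vs c"
    then show "x \<in> fc (ZS z0 vs) c" unfolding fc_def using ZS_le_mx by auto
  qed
  then show ?thesis by blast
qed

lemma fc_char:
  "x \<in> fc (ZS z0 vs) c \<longleftrightarrow> (\<exists>t. (\<forall>i<length vs. 0 \<le> t i \<and> t i \<le> 1 \<and> (c \<bullet> vs!i > 0 \<longrightarrow> t i = 1)
        \<and> (c \<bullet> vs!i < 0 \<longrightarrow> t i = 0)) \<and> x = z0 + (\<Sum>i<length vs. t i *\<^sub>R vs!i))"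
proof
  assume "x \<in> fc (ZS z0 vs) c"
  then have xZ: "x \<in> ZS z0 vs" and xv: "c \<bullet> x = mx z0 vs c" by (auto simp: fc_eq_hyper)
  obtain t where t: "\<forall>i<length vs. 0 \<le> t i \<and> t i \<le> 1" and x: "x = z0 + (\<Sum>i<length vs. t i *\<^sub>R vs!i)"
    using xZ unfolding ZS_def by blast
  have le: "t i * (c \<bullet> vs!i) \<le> max 0 (c \<bullet> vs!i)" if "i < length vs" for i
  proof -
    have "0 \<le> t i" "t i \<le> 1" using t that by auto
    then show ?thesis
      by (cases "c \<bullet> vs!i \<ge> 0") (auto simp: max_def mult_left_le_one_le mult_nonneg_nonpos)
  qed
  have "(\<Sum>i<length vs. max 0 (c \<bullet> vs!i) - t i * (c \<bullet> vs!i)) = 0"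
    using xv unfolding x inner_rep mx_def by (simp add: sum_subtractf)
  then have eq: "\<forall>i\<in>{..<length vs}. max 0 (c \<bullet> vs!i) - t i * (c \<bullet> vs!i) = 0"
    using le by (subst sum_nonneg_eq_0_iff[symmetric]) auto
  have "\<forall>i<length vs. 0 \<le> t i \<and> t i \<le> 1 \<and> (c \<bullet> vs!i > 0 \<longrightarrow> t i = 1) \<and> (c \<bullet> vs!i < 0 \<longrightarrow> t i = 0)"
  proof (intro allI impI conjI)
    fix i assume i: "i < length vs"
    show "0 \<le> t i" "t i \<le> 1" using t i by auto
    have e: "max 0 (c \<bullet> vs!i) = t i * (c \<bullet> vs!i)" using eq i by auto
    show "c \<bullet> vs!i > 0 \<Longrightarrow> t i = 1" using e by (auto simp: max_def)
    show "c \<bullet> vs!i < 0 \<Longrightarrow> t i = 0" using e by (auto simp: max_def)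
  qed
  then show "\<exists>t. (\<forall>i<length vs. 0 \<le> t i \<and> t i \<le> 1 \<and> (c \<bullet> vs!i > 0 \<longrightarrow> t i = 1)
        \<and> (c \<bullet> vs!i < 0 \<longrightarrow> t i = 0)) \<and> x = z0 + (\<Sum>i<length vs. t i *\<^sub>R vs!i)"
    using x by blast
next
  assume "\<exists>t. (\<forall>i<length vs. 0 \<le> t i \<and> t i \<le> 1 \<and> (c \<bullet> vs!i > 0 \<longrightarrow> t i = 1)
        \<and> (c \<bullet> vs!i < 0 \<longrightarrow> t i = 0)) \<and> x = z0 + (\<Sum>i<length vs. t i *\<^sub>R vs!i)"
  then obtain t where t: "\<forall>i<length vs. 0 \<le> t i \<and> t i \<le> 1 \<and> (c \<bullet> vs!i > 0 \<longrightarrow> t i = 1)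
        \<and> (c \<bullet> vs!i < 0 \<longrightarrow> t i = 0)" and x: "x = z0 + (\<Sum>i<length vs. t i *\<^sub>R vs!i)" by blast
  have xZ: "x \<in> ZS z0 vs" unfolding ZS_def using t x by blast
  have "t i * (c \<bullet> vs!i) = max 0 (c \<bullet> vs!i)" if "i < length vs" for i
  proof -
    have ti: "c \<bullet> vs!i > 0 \<longrightarrow> t i = 1" "c \<bullet> vs!i < 0 \<longrightarrow> t i = 0" using t that by auto
    show ?thesis
    proof (cases rule: linorder_cases[of "c \<bullet> vs!i" 0])
      case less then show ?thesis using ti by (simp add: max_def)
    next
      case equal then show ?thesis by simp
    next
      case greater then show ?thesis using ti by (simp add: max_def)
    qed
  qed
  then have "(\<Sum>i<length vs. t i * (c \<bullet> vs!i)) = (\<Sum>i<length vs. max 0 (c \<bullet> vs!i))"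
    by (intro sum.cong) auto
  then have "c \<bullet> x = mx z0 vs c" unfolding x inner_rep mx_def by simp
  then show "x \<in> fc (ZS z0 vs) c" using xZ by (simp add: fc_eq_hyper)
qed

lemma convex_ZS: "convex (ZS z0 vs)"
proof (rule convexI)
  fix x y :: "real^3" and u w :: real
  assume x: "x \<in> ZS z0 vs" and y: "y \<in> ZS z0 vs" and uw: "0 \<le> u" "0 \<le> w" "u + w = 1"
  obtain t where t: "\<forall>i<length vs. 0 \<le> t i \<and> t i \<le> 1" and xe: "x = z0 + (\<Sum>i<length vs. t i *\<^sub>R vs!i)"
    using x unfolding ZS_def by blast
  obtain s where s: "\<forall>i<length vs. 0 \<le> s i \<and> s i \<le> 1" and ye: "y = z0 + (\<Sum>i<length vs. s i *\<^sub>R vs!i)"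
    using y unfolding ZS_def by blast
  define r where "r i = u * t i + w * s i" for i
  have "\<forall>i<length vs. 0 \<le> r i \<and> r i \<le> 1"
  proof (intro allI impI conjI)
    fix i assume i: "i < length vs"
    show "0 \<le> r i" using t s i uw by (simp add: r_def)
    have "u * t i \<le> u" "w * s i \<le> w" using t s i uw by (auto simp: mult_left_le)
    then show "r i \<le> 1" using uw by (simp add: r_def)
  qed
  moreover have "u *\<^sub>R x + w *\<^sub>R y = z0 + (\<Sum>i<length vs. r i *\<^sub>R vs!i)"
  proof -
    have "u *\<^sub>R x + w *\<^sub>R y = (u + w) *\<^sub>R z0 + ((\<Sum>i<length vs. (u * t i) *\<^sub>R vs!i) + (\<Sum>i<length vs. (w * s i) *\<^sub>R vs!i))"
      unfolding xe ye by (simp add: scaleR_add_right scaleR_sum_right scaleR_add_left)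
    also have "\<dots> = z0 + (\<Sum>i<length vs. r i *\<^sub>R vs!i)"
      using uw by (simp add: r_def sum.distrib[symmetric] scaleR_add_left)
    finally show ?thesis .
  qed
  ultimately show "u *\<^sub>R x + w *\<^sub>R y \<in> ZS z0 vs" unfolding ZS_def by blast
qed

lemma fc_face: "fc (ZS z0 vs) c face_of ZS z0 vs"
  unfolding fc_eq_hyper using face_of_Int_supporting_hyperplane_le[OF convex_ZS] ZS_le_mx by blast

lemma fc_nonempty: "fc (ZS z0 vs) c \<noteq> {}"
  using fc_eq_hyper xst_in xst_val by blast

lemma fc_zero: "fc P 0 = P"
  unfolding fc_def by auto

lemma fc_scale: assumes "l > 0" shows "fc P (l *\<^sub>R c) = fc P c"
  unfolding fc_def using assms by (simp add: inner_scaleR_left)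

lemma fc_exposed:
  assumes "polyhedron P" "F face_of P" "F \<noteq> {}" shows "\<exists>c. F = fc P c"
proof -
  have "F exposed_face_of P" using assms exposed_face_of_polyhedron by blast
  then obtain a b where ab: "P \<subseteq> {x. a \<bullet> x \<le> b}" "F = P \<inter> {x. a \<bullet> x = b}"
    unfolding exposed_face_of_def by blast
  obtain x0 where "x0 \<in> F" using assms by blast
  then have x0: "x0 \<in> P" "a \<bullet> x0 = b" using ab by auto
  have "F = fc P a"
  proof
    show "F \<subseteq> fc P a" using ab unfolding fc_def by auto
    show "fc P a \<subseteq> F"
    proof
      fix x assume "x \<in> fc P a"
      then have "x \<in> P" "a \<bullet> x0 \<le> a \<bullet> x" using x0 unfolding fc_def by auto
      then show "x \<in> F" using ab x0 by fastforce
    qed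
  qed
  then show ?thesis by blast
qed

lemma Wsp_hyper: "Wsp vs c \<subseteq> {x. c \<bullet> x = 0}"
  unfolding Wsp_def by (rule span_minimal) (auto simp: subspace_hyperplane)

lemma subspace_Wsp: "subspace (Wsp vs c)"
  unfolding Wsp_def by simp

lemma in_Wsp_iff: "v \<in> set vs \<Longrightarrow> v \<in> Wsp vs c \<longleftrightarrow> c \<bullet> v = 0"
  using Wsp_hyper[of vs c] unfolding Wsp_def by (auto intro: span_base)

lemma aff_dim_dirspace:
  fixes S :: "(real^3) set"
  assumes "S \<noteq> {}" shows "aff_dim S = int (dim (dirspace S))"
proof -
  obtain a where a: "a \<in> S" using assms by blast
  have "aff_dim S = int (dim ((+) (- a) ` S))"
    using a by (intro aff_dim_eq_dim) (simp add: hull_inc)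
  also have "dim ((+) (- a) ` S) = dim (dirspace S)"
  proof -
    have "span ((+) (- a) ` S) = dirspace S"
    proof
      show "span ((+) (- a) ` S) \<subseteq> dirspace S"
        unfolding dirspace_def
      proof (rule span_mono, rule subsetI)
        fix z assume "z \<in> (+) (- a) ` S"
        then obtain x where x: "x \<in> S" "z = -a + x" by blast
        then have "z = x - a" by simp
        then show "z \<in> {x - y |x y. x \<in> S \<and> y \<in> S}" using x a by blast
      qed
      show "dirspace S \<subseteq> span ((+) (- a) ` S)"
        unfolding dirspace_def
      proof (rule span_minimal, safe)
        fix x y assume "x \<in> S" "y \<in> S"
        then have "-a + x \<in> span ((+) (- a) ` S)" "-a + y \<in> span ((+) (- a) ` S)"
          by (auto intro: span_base)
        then have "(-a + x) - (-a + y) \<in> span ((+) (- a) ` S)" by (rule span_diff)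
        then show "x - y \<in> span ((+) (- a) ` S)" by simp
      qed
    qed
    then show ?thesis by (metis dim_span)
  qed
  finally show ?thesis .
qed





lemma dirspace_fc2: "Wsp vs c \<subseteq> dirspace (fc (ZS z0 vs) c)"
proof -
  show "Wsp vs c \<subseteq> dirspace (fc (ZS z0 vs) c)"
    unfolding Wsp_def dirspace_def
  proof (rule span_mono, safe)
    fix v assume v: "v \<in> set vs" "c \<bullet> v = 0"
    then obtain j where j: "j < length vs" "v = vs!j" by (auto simp: in_set_conv_nth)
    define t where "t i = (if c \<bullet> vs!i > 0 then 1::real else 0)" for i :: nat
    define t1 where "t1 = t(j := 1)"
    define t0 where "t0 = t(j := 0)"
    have c1: "\<forall>i<length vs. 0 \<le> t1 i \<and> t1 i \<le> 1 \<and> (c \<bullet> vs!i > 0 \<longrightarrow> t1 i = 1)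
        \<and> (c \<bullet> vs!i < 0 \<longrightarrow> t1 i = 0)" using v j by (auto simp: t1_def t_def)
    have c0: "\<forall>i<length vs. 0 \<le> t0 i \<and> t0 i \<le> 1 \<and> (c \<bullet> vs!i > 0 \<longrightarrow> t0 i = 1)
        \<and> (c \<bullet> vs!i < 0 \<longrightarrow> t0 i = 0)" using v j by (auto simp: t0_def t_def)
    define x1 where "x1 = z0 + (\<Sum>i<length vs. t1 i *\<^sub>R vs!i)"
    define x0 where "x0 = z0 + (\<Sum>i<length vs. t0 i *\<^sub>R vs!i)"
    have "x1 \<in> fc (ZS z0 vs) c" unfolding fc_char by (intro exI[of _ t1] conjI c1 x1_def)
    moreover have "x0 \<in> fc (ZS z0 vs) c" unfolding fc_char by (intro exI[of _ t0] conjI c0 x0_def)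
    moreover have "x1 - x0 = v"
    proof -
      have "x1 - x0 = (\<Sum>i<length vs. (t1 i - t0 i) *\<^sub>R vs!i)"
        unfolding x1_def x0_def by (simp add: sum_subtractf scaleR_diff_left)
      also have "\<dots> = (\<Sum>i<length vs. (if i = j then vs!i else 0))"
        by (rule sum.cong) (auto simp: t1_def t0_def)
      also have "\<dots> = v" using j by simp
      finally show ?thesis .
    qed
    ultimately have "v = x1 - x0 \<and> x1 \<in> fc (ZS z0 vs) c \<and> x0 \<in> fc (ZS z0 vs) c" by simp
    then show "\<exists>x y. v = x - y \<and> x \<in> fc (ZS z0 vs) c \<and> y \<in> fc (ZS z0 vs) c" by blast
  qed
qed


lemma dirspace_fc1: "dirspace (fc (ZS z0 vs) c) \<subseteq> Wsp vs c"
  unfolding dirspace_def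
proof (rule span_minimal[OF _ subspace_Wsp], rule subsetI)
  fix z assume "z \<in> {x - y |x y. x \<in> fc (ZS z0 vs) c \<and> y \<in> fc (ZS z0 vs) c}"
  then obtain x y where z: "z = x - y" and x: "x \<in> fc (ZS z0 vs) c" and y: "y \<in> fc (ZS z0 vs) c" by blast
  obtain t where t: "\<forall>i<length vs. 0 \<le> t i \<and> t i \<le> 1 \<and> (c \<bullet> vs!i > 0 \<longrightarrow> t i = 1)
      \<and> (c \<bullet> vs!i < 0 \<longrightarrow> t i = 0)" and xe: "x = z0 + (\<Sum>i<length vs. t i *\<^sub>R vs!i)"
    using fc_char[THEN iffD1, OF x] by blast
  obtain s where s: "\<forall>i<length vs. 0 \<le> s i \<and> s i \<le> 1 \<and> (c \<bullet> vs!i > 0 \<longrightarrow> s i = 1)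
      \<and> (c \<bullet> vs!i < 0 \<longrightarrow> s i = 0)" and ye: "y = z0 + (\<Sum>i<length vs. s i *\<^sub>R vs!i)"
    using fc_char[THEN iffD1, OF y] by blast
  have "x - y = (\<Sum>i<length vs. (t i - s i) *\<^sub>R vs!i)"
    unfolding xe ye by (simp add: sum_subtractf scaleR_diff_left)
  also have "\<dots> \<in> Wsp vs c"
  proof (rule span_sum[of _ _ "{v \<in> set vs. c \<bullet> v = 0}", folded Wsp_def])
    fix i assume "i \<in> {..<length vs}"
    then have i: "i < length vs" by simp
    show "(t i - s i) *\<^sub>R vs!i \<in> Wsp vs c"
    proof (cases "c \<bullet> vs!i = 0")
      case True
      then have "vs!i \<in> Wsp vs c" unfolding Wsp_def using i by (auto intro!: span_base)
      then show ?thesis unfolding Wsp_def by (rule span_scale)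
    next
      case False
      have ti: "c \<bullet> vs!i > 0 \<longrightarrow> t i = 1" "c \<bullet> vs!i < 0 \<longrightarrow> t i = 0"
        "c \<bullet> vs!i > 0 \<longrightarrow> s i = 1" "c \<bullet> vs!i < 0 \<longrightarrow> s i = 0" using t s i by auto
      then have "t i = s i" using False by (cases "c \<bullet> vs!i > 0") auto
      then show ?thesis by (simp add: span_zero Wsp_def)
    qed
  qed
  finally show "z \<in> Wsp vs c" using z by simp
qed

lemma dirspace_fc: "dirspace (fc (ZS z0 vs) c) = Wsp vs c"
  using dirspace_fc1 dirspace_fc2 by blast

lemma aff_dim_fc: "aff_dim (fc (ZS z0 vs) c) = int (dim (Wsp vs c))"
  using aff_dim_dirspace[OF fc_nonempty] dirspace_fc by simp



definition ZI :: "(real^3) list \<Rightarrow> nat set \<Rightarrow> (real^3) set" where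
  "ZI vs I = {(\<Sum>i<length vs. (if i \<in> I then s i else 0) *\<^sub>R vs!i) | s. \<forall>i<length vs. 0 \<le> s i \<and> s i \<le> 1}"

lemma fc_translate_form:
  "fc (ZS z0 vs) c = (+) (xst z0 vs c) ` ZI vs {i. i < length vs \<and> c \<bullet> vs!i = 0}"
  (is "_ = _ ` ZI vs ?I")
proof (rule set_eqI, rule iffI)
  fix x assume "x \<in> fc (ZS z0 vs) c"
  then obtain t where t: "\<forall>i<length vs. 0 \<le> t i \<and> t i \<le> 1 \<and> (c \<bullet> vs!i > 0 \<longrightarrow> t i = 1)
      \<and> (c \<bullet> vs!i < 0 \<longrightarrow> t i = 0)" and xe: "x = z0 + (\<Sum>i<length vs. t i *\<^sub>R vs!i)"
    using fc_char[THEN iffD1] by blast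
  have "(\<Sum>i<length vs. (if i \<in> ?I then t i else 0) *\<^sub>R vs!i) \<in> ZI vs ?I"
    unfolding ZI_def using t by blast
  moreover have "x = xst z0 vs c + (\<Sum>i<length vs. (if i \<in> ?I then t i else 0) *\<^sub>R vs!i)"
  proof -
    have "(\<Sum>i<length vs. t i *\<^sub>R vs!i) = (\<Sum>i<length vs. (if c \<bullet> vs!i > 0 then 1 else 0) *\<^sub>R vs!i + (if i \<in> ?I then t i else 0) *\<^sub>R vs!i)"
    proof (rule sum.cong[OF refl])
      fix i assume "i \<in> {..<length vs}"
      then have i: "i < length vs" by simp
      have ti: "c \<bullet> vs!i > 0 \<longrightarrow> t i = 1" "c \<bullet> vs!i < 0 \<longrightarrow> t i = 0" using t i by auto
      show "t i *\<^sub>R vs!i = (if c \<bullet> vs!i > 0 then 1 else 0) *\<^sub>R vs!i + (if i \<in> ?I then t i else 0) *\<^sub>R vs!i"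
        using ti i by (cases rule: linorder_cases[of "c \<bullet> vs!i" 0]) auto
    qed
    then show ?thesis unfolding xe xst_def by (simp add: sum.distrib)
  qed
  ultimately show "x \<in> (+) (xst z0 vs c) ` ZI vs ?I" by blast
next
  fix x assume "x \<in> (+) (xst z0 vs c) ` ZI vs ?I"
  then obtain s where s: "\<forall>i<length vs. 0 \<le> s i \<and> s i \<le> 1"
    and xe: "x = xst z0 vs c + (\<Sum>i<length vs. (if i \<in> ?I then s i else 0) *\<^sub>R vs!i)"
    unfolding ZI_def by blast
  define t where "t i = (if c \<bullet> vs!i > 0 then 1 else if c \<bullet> vs!i = 0 then s i else 0)" for i
  have "\<forall>i<length vs. 0 \<le> t i \<and> t i \<le> 1 \<and> (c \<bullet> vs!i > 0 \<longrightarrow> t i = 1)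
      \<and> (c \<bullet> vs!i < 0 \<longrightarrow> t i = 0)" using s by (auto simp: t_def)
  moreover have "x = z0 + (\<Sum>i<length vs. t i *\<^sub>R vs!i)"
  proof -
    have "(\<Sum>i<length vs. t i *\<^sub>R vs!i) = (\<Sum>i<length vs. (if c \<bullet> vs!i > 0 then 1 else 0) *\<^sub>R vs!i + (if i \<in> ?I then s i else 0) *\<^sub>R vs!i)"
    proof (rule sum.cong[OF refl])
      fix i assume "i \<in> {..<length vs}"
      then have i: "i < length vs" by simp
      show "t i *\<^sub>R vs!i = (if c \<bullet> vs!i > 0 then 1 else 0) *\<^sub>R vs!i + (if i \<in> ?I then s i else 0) *\<^sub>R vs!i"
        using i by (cases rule: linorder_cases[of "c \<bullet> vs!i" 0]) (auto simp: t_def)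
    qed
    then show ?thesis unfolding xe xst_def by (simp add: sum.distrib)
  qed
  ultimately show "x \<in> fc (ZS z0 vs) c" using fc_char[THEN iffD2] by blast
qed

lemma fc_translate:
  assumes "Wsp vs c = Wsp vs c'"
  shows "\<exists>t. fc (ZS z0 vs) c' = (+) t ` fc (ZS z0 vs) c"
proof -
  have I: "{i. i < length vs \<and> c \<bullet> vs!i = 0} = {i. i < length vs \<and> c' \<bullet> vs!i = 0}"
    using in_Wsp_iff[of _ vs c] in_Wsp_iff[of _ vs c'] assms nth_mem by blast
  show ?thesis
    unfolding fc_translate_form I image_image
    by (rule exI[of _ "xst z0 vs c' - xst z0 vs c"]) (simp add: algebra_simps)
qed

lemma fc_mono_sign:
  assumes "\<forall>v\<in>set vs. n \<bullet> v > 0 \<longrightarrow> c \<bullet> v > 0" "\<forall>v\<in>set vs. n \<bullet> v < 0 \<longrightarrow> c \<bullet> v < 0"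
  shows "fc (ZS z0 vs) c \<subseteq> fc (ZS z0 vs) n"
proof
  fix x assume "x \<in> fc (ZS z0 vs) c"
  then obtain t where t: "\<forall>i<length vs. 0 \<le> t i \<and> t i \<le> 1 \<and> (c \<bullet> vs!i > 0 \<longrightarrow> t i = 1)
      \<and> (c \<bullet> vs!i < 0 \<longrightarrow> t i = 0)" and xe: "x = z0 + (\<Sum>i<length vs. t i *\<^sub>R vs!i)"
    using fc_char[THEN iffD1] by blast
  have "\<forall>i<length vs. 0 \<le> t i \<and> t i \<le> 1 \<and> (n \<bullet> vs!i > 0 \<longrightarrow> t i = 1)
      \<and> (n \<bullet> vs!i < 0 \<longrightarrow> t i = 0)"
  proof (intro allI impI)
    fix i assume i: "i < length vs"
    have "vs!i \<in> set vs" using i by simp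
    then show "0 \<le> t i \<and> t i \<le> 1 \<and> (n \<bullet> vs!i > 0 \<longrightarrow> t i = 1) \<and> (n \<bullet> vs!i < 0 \<longrightarrow> t i = 0)"
      using t i assms by blast
  qed
  then show "x \<in> fc (ZS z0 vs) n" using xe fc_char[THEN iffD2] by blast
qed

lemma avoid_zero:
  fixes A :: "(real^3) set"
  assumes "finite A" "subspace S" "\<forall>a\<in>A. \<exists>s\<in>S. s \<bullet> a \<noteq> 0"
  shows "\<exists>d\<in>S. \<forall>a\<in>A. d \<bullet> a \<noteq> 0"
  using assms
proof (induction A rule: finite_induct)
  case empty
  then show ?case using subspace_0 by blast
next
  case (insert a A)
  then obtain d where d: "d \<in> S" "\<forall>b\<in>A. d \<bullet> b \<noteq> 0" by blast
  obtain s where s: "s \<in> S" "s \<bullet> a \<noteq> 0" using insert by blast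
  define B where "B = (\<lambda>b. - (d \<bullet> b) / (s \<bullet> b)) ` insert a A"
  have "finite B" using insert unfolding B_def by simp
  then obtain u where u: "u \<notin> B" using ex_new_if_finite[OF infinite_UNIV_char_0] by blast
  have "\<forall>b\<in>insert a A. (d + u *\<^sub>R s) \<bullet> b \<noteq> 0"
  proof
    fix b assume b: "b \<in> insert a A"
    show "(d + u *\<^sub>R s) \<bullet> b \<noteq> 0"
    proof (cases "s \<bullet> b = 0")
      case True
      then have "b \<noteq> a" using s by auto
      then have "d \<bullet> b \<noteq> 0" using d b by auto
      then show ?thesis using True by (simp add: inner_add_left)
    next
      case False
      have "u \<noteq> - (d \<bullet> b) / (s \<bullet> b)" using u b unfolding B_def by blast
      then have "u * (s \<bullet> b) \<noteq> - (d \<bullet> b)" using False by (simp add: field_simps)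
      then show ?thesis by (simp add: inner_add_left algebra_simps)
    qed
  qed
  moreover have "d + u *\<^sub>R s \<in> S" using d s insert.prems(1) by (simp add: subspace_add subspace_scale)
  ultimately show ?case by blast
qed

lemma perturb_exists:
  fixes h n :: "real^3" and V :: "(real^3) set"
  assumes "finite V" "h \<noteq> 0" "n \<bullet> h = 0"
  shows "\<exists>c. c \<bullet> h = 0 \<and> (\<forall>v\<in>V. n \<bullet> v > 0 \<longrightarrow> c \<bullet> v > 0) \<and> (\<forall>v\<in>V. n \<bullet> v < 0 \<longrightarrow> c \<bullet> v < 0)
             \<and> (\<forall>v\<in>V. v \<notin> span {h} \<longrightarrow> c \<bullet> v \<noteq> 0)"
proof -
  let ?A = "{v\<in>V. v \<notin> span {h}}"
  have "\<forall>a\<in>?A. \<exists>s\<in>{x. h \<bullet> x = 0}. s \<bullet> a \<noteq> 0"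
  proof
    fix a assume a: "a \<in> ?A"
    define s where "s = a - ((a \<bullet> h) / (h \<bullet> h)) *\<^sub>R h"
    have hh: "h \<bullet> h \<noteq> 0" using assms by simp
    have sh: "h \<bullet> s = 0" unfolding s_def using hh by (simp add: inner_diff_right inner_commute)
    have "s \<noteq> 0"
    proof
      assume "s = 0"
      then have "a = ((a \<bullet> h) / (h \<bullet> h)) *\<^sub>R h" unfolding s_def by simp
      then have "a \<in> span {h}" by (metis span_base span_scale singletonI)
      then show False using a by simp
    qed
    have "s \<bullet> a = s \<bullet> s"
    proof -
      have "s \<bullet> (a - ((a \<bullet> h) / (h \<bullet> h)) *\<^sub>R h) = s \<bullet> a - ((a \<bullet> h) / (h \<bullet> h)) * (s \<bullet> h)"
        by (simp add: inner_diff_right)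
      then have "s \<bullet> s = s \<bullet> a - ((a \<bullet> h) / (h \<bullet> h)) * (s \<bullet> h)"
        using s_def by simp
      then show ?thesis using sh by (simp add: inner_commute)
    qed
    then have "s \<bullet> a \<noteq> 0" using \<open>s \<noteq> 0\<close> by simp
    then show "\<exists>s\<in>{x. h \<bullet> x = 0}. s \<bullet> a \<noteq> 0" using sh by blast
  qed
  then obtain d where d: "h \<bullet> d = 0" "\<forall>a\<in>?A. d \<bullet> a \<noteq> 0"
    using avoid_zero[of ?A "{x. h \<bullet> x = 0}"] assms(1) subspace_hyperplane by auto
  define P where "P = (\<lambda>e v. (n \<bullet> v > 0 \<longrightarrow> n \<bullet> v + e * (d \<bullet> v) > 0) \<and> (n \<bullet> v < 0 \<longrightarrow> n \<bullet> v + e * (d \<bullet> v) < 0))"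
  have "\<forall>v\<in>V. eventually (\<lambda>e. P e v) (at_right (0::real))"
  proof
    fix v assume "v \<in> V"
    have lim: "((\<lambda>e. n \<bullet> v + e * (d \<bullet> v)) \<longlongrightarrow> n \<bullet> v + 0 * (d \<bullet> v)) (at_right (0::real))"
      by (intro tendsto_intros)
    have "eventually (\<lambda>e. n \<bullet> v > 0 \<longrightarrow> n \<bullet> v + e * (d \<bullet> v) > 0) (at_right (0::real))"
      using order_tendstoD(1)[OF lim, of 0] by (cases "n \<bullet> v > 0") auto
    moreover have "eventually (\<lambda>e. n \<bullet> v < 0 \<longrightarrow> n \<bullet> v + e * (d \<bullet> v) < 0) (at_right (0::real))"
      using order_tendstoD(2)[OF lim, of 0] by (cases "n \<bullet> v < 0") auto
    ultimately show "eventually (\<lambda>e. P e v) (at_right (0::real))"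
      unfolding P_def by (rule eventually_conj)
  qed
  then have "eventually (\<lambda>e. \<forall>v\<in>V. P e v) (at_right (0::real))"
    using eventually_ball_finite assms(1) by blast
  then obtain b :: real where b: "b > 0" "\<forall>y>0. y < b \<longrightarrow> (\<forall>v\<in>V. P y v)"
    unfolding eventually_at_right_field by blast
  define e where "e = b / 2"
  have e: "e > 0" "\<forall>v\<in>V. P e v" using b unfolding e_def by auto
  define c where "c = n + e *\<^sub>R d"
  have cv: "c \<bullet> v = n \<bullet> v + e * (d \<bullet> v)" for v unfolding c_def by (simp add: inner_add_left)
  have "c \<bullet> h = 0" using cv[of h] assms d by (simp add: inner_commute)
  moreover have "\<forall>v\<in>V. n \<bullet> v > 0 \<longrightarrow> c \<bullet> v > 0" using e cv unfolding P_def by auto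
  moreover have "\<forall>v\<in>V. n \<bullet> v < 0 \<longrightarrow> c \<bullet> v < 0" using e cv unfolding P_def by auto
  moreover have "\<forall>v\<in>V. v \<notin> span {h} \<longrightarrow> c \<bullet> v \<noteq> 0"
  proof (intro ballI impI)
    fix v assume v: "v \<in> V" "v \<notin> span {h}"
    show "c \<bullet> v \<noteq> 0"
    proof (cases "n \<bullet> v = 0")
      case True
      then show ?thesis using cv[of v] d v e(1) by auto
    next
      case False
      then show ?thesis using e v cv[of v] unfolding P_def by (cases "n \<bullet> v > 0") auto
    qed
  qed
  ultimately show ?thesis by blast
qed



lemma indep_sym:
  fixes x y :: "real^3"
  assumes "x \<noteq> 0" "y \<notin> span {x}" shows "y \<noteq> 0" "x \<notin> span {y}"
proof -
  show "y \<noteq> 0" using assms span_zero by auto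
  show "x \<notin> span {y}"
  proof
    assume "x \<in> span {y}"
    then obtain k where k: "x = k *\<^sub>R y" by (auto simp: span_singleton)
    then have "k \<noteq> 0" using assms by auto
    then have "y = (1/k) *\<^sub>R x" using k by simp
    then have "y \<in> span {x}" by (metis span_base span_scale singletonI)
    then show False using assms by simp
  qed
qed

lemma dim_pair:
  fixes h v :: "real^3"
  assumes "h \<noteq> 0" "v \<notin> span {h}" shows "dim (span {h, v}) = 2"
proof -
  have "dim (insert v {h}) = 2" using assms by (simp add: dim_insert)
  then show ?thesis by (simp add: insert_commute)
qed

lemma plane_eq:
  fixes x y :: "real^3"
  assumes "subspace m" "dim m \<le> 2" "x \<in> m" "y \<in> m" "x \<noteq> 0" "y \<notin> span {x}"
  shows "m = span {x, y}"
proof -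
  have sub: "span {x, y} \<subseteq> m" using assms by (intro span_minimal) auto
  have "dim (span {x, y}) = 2" using dim_pair assms by blast
  then show ?thesis using subspace_dim_equal[of "span {x,y}" m] sub assms by simp
qed

lemma hyper_dim:
  fixes c :: "real^3"
  assumes "c \<noteq> 0" shows "dim {x. c \<bullet> x = 0} = 2"
  using dim_hyperplane[OF assms] by simp

lemma plane_hyper:
  fixes c :: "real^3"
  assumes "c \<noteq> 0" "subspace p" "dim p = 2" "p \<subseteq> {x. c \<bullet> x = 0}"
  shows "p = {x. c \<bullet> x = 0}"
  using subspace_dim_equal[of p "{x. c \<bullet> x = 0}", OF _ subspace_hyperplane] assms hyper_dim[OF assms(1)] by simp

lemma normals_parallel:
  fixes c c' :: "real^3"
  assumes "c \<noteq> 0" "c' \<noteq> 0" "{x. c \<bullet> x = 0} \<subseteq> {x. c' \<bullet> x = 0}"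
  shows "\<exists>m. m \<noteq> 0 \<and> c' = m *\<^sub>R c"
proof -
  define k where "k = (c' \<bullet> c) / (c \<bullet> c)"
  define d where "d = c' - k *\<^sub>R c"
  have cc: "c \<bullet> c \<noteq> 0" using assms by simp
  have "c \<bullet> d = 0" unfolding d_def k_def using cc by (simp add: inner_diff_right inner_commute)
  then have c'd: "c' \<bullet> d = 0" using assms(3) by blast
  have "d \<bullet> d = d \<bullet> c' - k * (d \<bullet> c)" by (metis d_def inner_diff_right inner_scaleR_right)
  also have "\<dots> = 0" using c'd \<open>c \<bullet> d = 0\<close> by (simp add: inner_commute)
  finally have "d = 0" by simp
  then have "c' = k *\<^sub>R c" unfolding d_def by simp
  moreover have "k \<noteq> 0" using assms calculation by auto
  ultimately show ?thesis by blast
qed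

lemma exists_normal:
  fixes h v :: "real^3"
  shows "\<exists>n. n \<noteq> 0 \<and> n \<bullet> h = 0 \<and> n \<bullet> v = 0"
proof -
  have "dim {h, v} \<le> card {h, v}" by (rule dim_le_card) (auto intro: span_base)
  also have "\<dots> \<le> 2" by (simp add: card_insert_le_m1)
  finally have "dim {h, v} < DIM(real^3)" by simp
  then obtain n where "n \<noteq> 0" "\<And>y. y \<in> span {h, v} \<Longrightarrow> orthogonal n y"
    using orthogonal_to_subspace_exists by blast
  then show ?thesis unfolding orthogonal_def by (meson insertI1 insertI2 singletonI span_base)
qed



definition Pl :: "(real^3) set \<Rightarrow> real^3 \<Rightarrow> (real^3) set set" where
  "Pl V h = (\<lambda>v. span {h, v}) ` {v\<in>V. v \<notin> span {h}}"

lemma dirspace_translation: "dirspace ((+) t ` S) = dirspace S"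
proof -
  have "{x - y |x y. x \<in> (+) t ` S \<and> y \<in> (+) t ` S} = {x - y |x y. x \<in> S \<and> y \<in> S}"
  proof (rule set_eqI, rule iffI)
    fix z assume "z \<in> {x - y |x y. x \<in> (+) t ` S \<and> y \<in> (+) t ` S}"
    then obtain x y where "x \<in> S" "y \<in> S" "z = (t + x) - (t + y)" by blast
    then have "z = x - y \<and> x \<in> S \<and> y \<in> S" by simp
    then show "z \<in> {x - y |x y. x \<in> S \<and> y \<in> S}" by blast
  next
    fix z assume "z \<in> {x - y |x y. x \<in> S \<and> y \<in> S}"
    then obtain x y where "x \<in> S" "y \<in> S" "z = x - y" by blast
    then have "z = (t + x) - (t + y) \<and> t + x \<in> (+) t ` S \<and> t + y \<in> (+) t ` S" by simp
    then show "z \<in> {x - y |x y. x \<in> (+) t ` S \<and> y \<in> (+) t ` S}" by blast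
  qed
  then show ?thesis unfolding dirspace_def by simp
qed

lemma dirspace_mono: "S \<subseteq> T \<Longrightarrow> dirspace S \<subseteq> dirspace T"
  unfolding dirspace_def by (rule span_mono) blast

lemma dim_span_single: "(h::real^3) \<noteq> 0 \<Longrightarrow> dim (span {h}) = 1"
  by simp

lemma Wsp_single:
  assumes "h \<in> set vs" "c \<bullet> h = 0" "\<forall>v\<in>set vs. v \<notin> span {h} \<longrightarrow> c \<bullet> v \<noteq> 0"
  shows "Wsp vs c = span {h}"
proof
  show "Wsp vs c \<subseteq> span {h}" unfolding Wsp_def
    by (rule span_minimal) (use assms in \<open>auto simp: span_base\<close>)
  show "span {h} \<subseteq> Wsp vs c" unfolding Wsp_def
    by (rule span_mono) (use assms in auto)
qed

context
  fixes z0 :: "real^3" and vs :: "(real^3) list"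
  assumes polyP: "polytope (ZS z0 vs)" and dim3: "aff_dim (ZS z0 vs) = 3"
begin

abbreviation "PP \<equiv> ZS z0 vs"

lemma face_fc: assumes "F face_of PP" "F \<noteq> {}" shows "\<exists>c. F = fc PP c"
  using fc_exposed[OF polytope_imp_polyhedron[OF polyP] assms] .

lemma edge_dir:
  assumes "E edge_of PP" shows "\<exists>g\<in>set vs. g \<noteq> 0 \<and> dirspace E = span {g}"
proof -
  have "E \<noteq> {}" using assms unfolding edge_of_def by auto
  then obtain c where c: "E = fc PP c" using face_fc assms unfolding edge_of_def by blast
  have d1: "dim (Wsp vs c) = 1" using assms aff_dim_fc[of z0 vs c] c unfolding edge_of_def by simp
  have "\<exists>g\<in>set vs. c \<bullet> g = 0 \<and> g \<noteq> 0"
  proof (rule ccontr)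
    assume "\<not> ?thesis"
    then have "{v\<in>set vs. c \<bullet> v = 0} \<subseteq> {0}" by auto
    then have "Wsp vs c \<subseteq> span {0}" unfolding Wsp_def by (rule span_mono)
    then have "dim (Wsp vs c) \<le> dim (span {0::real^3})" by (rule dim_subset)
    then show False using d1 by simp
  qed
  then obtain g where g: "g \<in> set vs" "c \<bullet> g = 0" "g \<noteq> 0" by blast
  have sub: "span {g} \<subseteq> Wsp vs c" unfolding Wsp_def using g by (intro span_mono) auto
  have "span {g} = Wsp vs c"
    using subspace_dim_equal[OF subspace_span subspace_Wsp sub] d1 g by simp
  then show ?thesis using g c dirspace_fc by auto
qed

lemma facet_form:
  assumes "F facet_of PP" shows "\<exists>c. c \<noteq> 0 \<and> F = fc PP c \<and> dim (Wsp vs c) = 2"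
proof -
  obtain c where c: "F = fc PP c" using face_fc assms unfolding facet_of_def by blast
  have "aff_dim F = 2" using assms dim3 unfolding facet_of_def by simp
  then have d: "dim (Wsp vs c) = 2" using aff_dim_fc[of z0 vs c] c by simp
  have "c \<noteq> 0"
  proof
    assume "c = 0"
    then have "F = PP" using c fc_zero by simp
    then show False using \<open>aff_dim F = 2\<close> dim3 by simp
  qed
  then show ?thesis using c d by blast
qed

lemma fc_neg_ne:
  assumes "dim (Wsp vs n) = 2" shows "fc PP n \<noteq> fc PP (-n)"
proof
  assume eq: "fc PP n = fc PP (-n)"
  obtain x where x: "x \<in> fc PP n" using fc_nonempty by blast
  have "fc PP n = PP"
  proof
    show "fc PP n \<subseteq> PP" unfolding fc_def by auto
    show "PP \<subseteq> fc PP n"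
    proof
      fix y assume y: "y \<in> PP"
      have "x \<in> fc PP (-n)" using x eq by simp
      then have "n \<bullet> y = n \<bullet> x" using x y unfolding fc_def by force
      moreover have "\<forall>z\<in>PP. n \<bullet> z \<le> n \<bullet> x" using x unfolding fc_def by auto
      ultimately show "y \<in> fc PP n" using y unfolding fc_def by auto
    qed
  qed
  then have "aff_dim PP = 2" using aff_dim_fc[of z0 vs n] assms by simp
  then show False using dim3 by simp
qed

lemma facets_per_plane:
  "finite {F. F facet_of PP \<and> dirspace F = p} \<and> card {F. F facet_of PP \<and> dirspace F = p} \<le> 2"
proof (cases "{F. F facet_of PP \<and> dirspace F = p} = {}")
  case True then show ?thesis unfolding True by simp
next
  case False
  then obtain F0 where F0: "F0 facet_of PP" "dirspace F0 = p" by blast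
  obtain c0 where c0: "c0 \<noteq> 0" "F0 = fc PP c0" "dim (Wsp vs c0) = 2" using facet_form[OF F0(1)] by blast
  have p0: "p = {x. c0 \<bullet> x = 0}"
    using plane_hyper[OF c0(1) subspace_Wsp c0(3) Wsp_hyper] F0(2) c0(2) dirspace_fc by simp
  have "{F. F facet_of PP \<and> dirspace F = p} \<subseteq> {fc PP c0, fc PP (-c0)}"
  proof
    fix F assume "F \<in> {F. F facet_of PP \<and> dirspace F = p}"
    then have F: "F facet_of PP" "dirspace F = p" by auto
    obtain c where c: "c \<noteq> 0" "F = fc PP c" "dim (Wsp vs c) = 2" using facet_form[OF F(1)] by blast
    have p1: "p = {x. c \<bullet> x = 0}"
      using plane_hyper[OF c(1) subspace_Wsp c(3) Wsp_hyper] F(2) c(2) dirspace_fc by simp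
    obtain m where m: "m \<noteq> 0" "c = m *\<^sub>R c0" using normals_parallel[OF c0(1) c(1)] p0 p1 by blast
    show "F \<in> {fc PP c0, fc PP (-c0)}"
    proof (cases "m > 0")
      case True
      then have "fc PP (m *\<^sub>R c0) = fc PP c0" by (rule fc_scale)
      then show ?thesis using c m by simp
    next
      case False
      then have "-m > 0" using m by simp
      then have "fc PP ((-m) *\<^sub>R (-c0)) = fc PP (-c0)" by (rule fc_scale)
      moreover have "c = (-m) *\<^sub>R (-c0)" using m by simp
      ultimately show ?thesis using c by simp
    qed
  qed
  moreover have "card {fc PP c0, fc PP (-c0)} \<le> 2" by (simp add: card_insert_le_m1)
  ultimately show ?thesis by (meson card_mono finite.emptyI finite_insert finite_subset order_trans)
qed

lemma belt_upper:
  assumes "E edge_of PP" "g \<in> set vs" "g \<noteq> 0" "dirspace E = span {g}"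
  shows "finite (belt PP E) \<and> card (belt PP E) \<le> 2 * card (Pl (set vs) g)"
proof -
  let ?U = "\<Union>p\<in>Pl (set vs) g. {F. F facet_of PP \<and> dirspace F = p}"
  have sub: "belt PP E \<subseteq> ?U"
  proof
    fix F assume "F \<in> belt PP E"
    then obtain t where F: "F facet_of PP" "((+) t ` E) edge_of F"
      unfolding belt_def by (auto simp: add.commute)
    obtain c where c: "c \<noteq> 0" "F = fc PP c" "dim (Wsp vs c) = 2" using facet_form[OF F(1)] by blast
    have "dirspace ((+) t ` E) \<subseteq> dirspace F"
      using F(2) edge_of_imp_subset dirspace_mono by blast
    then have gW: "g \<in> Wsp vs c" using assms(4) c(2) dirspace_fc dirspace_translation span_base by blast
    have "\<exists>v\<in>set vs. c \<bullet> v = 0 \<and> v \<notin> span {g}"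
    proof (rule ccontr)
      assume "\<not> ?thesis"
      then have "Wsp vs c \<subseteq> span {g}" unfolding Wsp_def by (intro span_minimal) auto
      then have "dim (Wsp vs c) \<le> dim (span {g})" by (rule dim_subset)
      then show False using c(3) assms(3) by simp
    qed
    then obtain v where v: "v \<in> set vs" "c \<bullet> v = 0" "v \<notin> span {g}" by blast
    have vW: "v \<in> Wsp vs c" unfolding Wsp_def using v by (auto intro: span_base)
    have "Wsp vs c = span {g, v}"
      using plane_eq[OF subspace_Wsp _ gW vW assms(3) v(3)] c(3) by simp
    then have "dirspace F = span {g, v}" using c(2) dirspace_fc by simp
    moreover have "span {g, v} \<in> Pl (set vs) g" unfolding Pl_def using v by blast
    ultimately show "F \<in> ?U" using F(1) by blast
  qed
  have finPl: "finite (Pl (set vs) g)" unfolding Pl_def by simp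
  have finU: "finite ?U" using finPl facets_per_plane by blast
  have "card ?U \<le> (\<Sum>p\<in>Pl (set vs) g. card {F. F facet_of PP \<and> dirspace F = p})"
    by (rule card_UN_le[OF finPl])
  also have "\<dots> \<le> (\<Sum>p\<in>Pl (set vs) g. 2)"
    by (rule sum_mono) (use facets_per_plane in blast)
  also have "\<dots> = 2 * card (Pl (set vs) g)" by simp
  finally show ?thesis using card_mono[OF finU sub] finite_subset[OF sub finU] by simp
qed


lemma Wsp_neg: "Wsp vs (-n) = Wsp vs n"
  unfolding Wsp_def by simp

lemma fc_in_belt:
  assumes h: "h \<in> set vs" "h \<noteq> 0" and c0: "Wsp vs c0 = span {h}"
    and s: "s \<bullet> h = 0" "dim (Wsp vs s) = 2"
  shows "fc PP s \<in> belt PP (fc PP c0)"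
proof -
  have facet: "fc PP s facet_of PP"
    unfolding facet_of_def using fc_face fc_nonempty aff_dim_fc[of z0 vs s] s dim3 by simp
  obtain c' where c': "c' \<bullet> h = 0" "\<forall>v\<in>set vs. s \<bullet> v > 0 \<longrightarrow> c' \<bullet> v > 0"
      "\<forall>v\<in>set vs. s \<bullet> v < 0 \<longrightarrow> c' \<bullet> v < 0" "\<forall>v\<in>set vs. v \<notin> span {h} \<longrightarrow> c' \<bullet> v \<noteq> 0"
    using perturb_exists[of "set vs" h s] h s by auto
  have W': "Wsp vs c' = span {h}" using Wsp_single[OF h(1) c'(1) c'(4)] .
  have sub: "fc PP c' \<subseteq> fc PP s" using fc_mono_sign c'(2,3) by blast
  have "fc PP c' face_of fc PP s"
    using face_of_subset[OF fc_face sub] unfolding fc_def by blast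
  moreover have "aff_dim (fc PP c') = 1" using aff_dim_fc[of z0 vs c'] W' h by simp
  ultimately have e: "fc PP c' edge_of fc PP s" unfolding edge_of_def by blast
  obtain t where "fc PP c' = (+) t ` fc PP c0" using fc_translate[of vs c0 c' z0] W' c0 by auto
  then have "((\<lambda>x. t + x) ` fc PP c0) edge_of fc PP s" using e by simp
  then show ?thesis unfolding belt_def using facet by blast
qed

lemma plane_normal:
  assumes "p \<in> Pl (set vs) h" "h \<noteq> 0" "h \<in> set vs"
  shows "\<exists>n. n \<noteq> 0 \<and> n \<bullet> h = 0 \<and> Wsp vs n = p \<and> dim (Wsp vs n) = 2"
proof -
  obtain v where v: "v \<in> set vs" "v \<notin> span {h}" "p = span {h, v}" using assms unfolding Pl_def by blast
  obtain n where n: "n \<noteq> 0" "n \<bullet> h = 0" "n \<bullet> v = 0" using exists_normal by blast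
  have dp: "dim p = 2" using dim_pair[OF assms(2) v(2)] v(3) by simp
  have "p \<subseteq> {x. n \<bullet> x = 0}" unfolding v(3) using n by (intro span_minimal subspace_hyperplane) auto
  then have pe: "p = {x. n \<bullet> x = 0}" using plane_hyper[OF n(1) _ dp] v(3) by simp
  have "Wsp vs n \<subseteq> p" using Wsp_hyper pe by blast
  moreover have "p \<subseteq> Wsp vs n" unfolding v(3) Wsp_def
    by (rule span_mono) (use n v assms in \<open>auto\<close>)
  ultimately have "Wsp vs n = p" by blast
  then show ?thesis using n dp by blast
qed

lemma belt_lower:
  assumes h: "h \<in> set vs" "h \<noteq> 0"
  shows "\<exists>M. M edge_of PP \<and> dirspace M = span {h} \<and> 2 * card (Pl (set vs) h) \<le> card (belt PP M)"
proof -
  obtain c0 where c0: "c0 \<bullet> h = 0" "\<forall>v\<in>set vs. v \<notin> span {h} \<longrightarrow> c0 \<bullet> v \<noteq> 0"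
    using perturb_exists[of "set vs" h 0] h by auto
  have W0: "Wsp vs c0 = span {h}" using Wsp_single[OF h(1) c0(1) c0(2)] .
  define M where "M = fc PP c0"
  have edge: "M edge_of PP" unfolding edge_of_def M_def
    using fc_face aff_dim_fc[of z0 vs c0] W0 h by simp
  have dM: "dirspace M = span {h}" unfolding M_def using dirspace_fc W0 by simp
  have "\<forall>p\<in>Pl (set vs) h. \<exists>n. n \<noteq> 0 \<and> n \<bullet> h = 0 \<and> Wsp vs n = p \<and> dim (Wsp vs n) = 2"
    using plane_normal h by blast
  then obtain N where N: "\<And>p. p \<in> Pl (set vs) h \<Longrightarrow> N p \<noteq> 0 \<and> N p \<bullet> h = 0 \<and> Wsp vs (N p) = p \<and> dim (Wsp vs (N p)) = 2"
    by metis
  define S1 where "S1 = (\<lambda>p. fc PP (N p)) ` Pl (set vs) h"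
  define S2 where "S2 = (\<lambda>p. fc PP (- N p)) ` Pl (set vs) h"
  have d1: "dirspace (fc PP (N p)) = p" if "p \<in> Pl (set vs) h" for p
    using N[OF that] dirspace_fc by simp
  have d2: "dirspace (fc PP (- N p)) = p" if "p \<in> Pl (set vs) h" for p
    using N[OF that] dirspace_fc Wsp_neg by simp
  have finPl: "finite (Pl (set vs) h)" unfolding Pl_def by simp
  have inj1: "inj_on (\<lambda>p. fc PP (N p)) (Pl (set vs) h)"
    by (rule inj_onI) (metis d1)
  have inj2: "inj_on (\<lambda>p. fc PP (- N p)) (Pl (set vs) h)"
    by (rule inj_onI) (metis d2)
  have disj: "S1 \<inter> S2 = {}"
  proof (rule ccontr)
    assume "S1 \<inter> S2 \<noteq> {}"
    then obtain p q where pq: "p \<in> Pl (set vs) h" "q \<in> Pl (set vs) h" "fc PP (N p) = fc PP (- N q)"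
      unfolding S1_def S2_def by blast
    then have "p = q" using d1 d2 by metis
    then show False using fc_neg_ne[of "N p"] N[OF pq(1)] pq(3) by auto
  qed
  have b1: "fc PP (N p) \<in> belt PP M" if "p \<in> Pl (set vs) h" for p
    using fc_in_belt[OF h W0, of "N p"] N[OF that] unfolding M_def by auto
  have b2: "fc PP (- N p) \<in> belt PP M" if "p \<in> Pl (set vs) h" for p
  proof -
    have "(- N p) \<bullet> h = 0" "dim (Wsp vs (- N p)) = 2" using N[OF that] Wsp_neg[of "N p"] by auto
    then show ?thesis using fc_in_belt[OF h W0, of "- N p"] unfolding M_def by auto
  qed
  have sub: "S1 \<union> S2 \<subseteq> belt PP M"
    unfolding S1_def S2_def using b1 b2 by blast
  have finB: "finite (belt PP M)"
  proof (rule finite_subset[OF _ finite_polytope_faces[OF polyP]])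
    show "belt PP M \<subseteq> {F. F face_of PP}" unfolding belt_def facet_of_def by blast
  qed
  have "card (S1 \<union> S2) = card S1 + card S2"
    using disj finPl unfolding S1_def S2_def by (intro card_Un_disjoint) auto
  also have "\<dots> = 2 * card (Pl (set vs) h)"
    unfolding S1_def S2_def using card_image[OF inj1] card_image[OF inj2] by simp
  finally have "2 * card (Pl (set vs) h) \<le> card (belt PP M)"
    using card_mono[OF finB sub] by simp
  then show ?thesis using edge dM by blast
qed

end



definition gp :: "(real^3) set \<Rightarrow> real^3 \<Rightarrow> real^3 \<Rightarrow> real^3 \<Rightarrow> bool" where
  "gp V g X Y \<longleftrightarrow> X \<in> V \<and> Y \<in> V \<and> X \<notin> span {g} \<and> Y \<notin> span {g} \<and> Y \<notin> span {g, X} \<and> X \<notin> span {g, Y}"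

lemma gp_sym: "gp V g X Y \<Longrightarrow> gp V g Y X"
  unfolding gp_def by blast

lemma gp_nz: "gp V g X Y \<Longrightarrow> X \<noteq> 0"
  unfolding gp_def using span_zero by blast

lemma gp_ind: assumes "gp V g X Y" shows "Y \<notin> span {X}"
proof
  assume "Y \<in> span {X}"
  moreover have "span {X} \<subseteq> span {g, X}" by (rule span_mono) auto
  ultimately show False using assms unfolding gp_def by blast
qed

lemma same_plane:
  fixes x y :: "real^3"
  assumes "subspace m1" "dim m1 \<le> 2" "subspace m2" "dim m2 \<le> 2"
    "x \<in> m1" "y \<in> m1" "x \<in> m2" "y \<in> m2" "x \<noteq> 0" "y \<notin> span {x}"
  shows "m1 = m2"
  using plane_eq[of m1 x y] plane_eq[of m2 x y] assms by simp

lemma dim_span2: "dim (span {x, y::real^3}) \<le> 2"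
proof -
  have "dim (span {x, y}) = dim {x, y}" by simp
  also have "\<dots> \<le> card {x, y}" by (rule dim_le_card) (auto intro: span_base)
  also have "\<dots> \<le> 2" by (simp add: card_insert_le_m1)
  finally show ?thesis .
qed

lemma card4:
  assumes "finite S" "a \<in> S" "b \<in> S" "c \<in> S" "d \<in> S"
    "a \<noteq> b" "a \<noteq> c" "a \<noteq> d" "b \<noteq> c" "b \<noteq> d" "c \<noteq> d"
  shows "4 \<le> card S"
proof -
  have "card {a, b, c, d} = 4" using assms by simp
  moreover have "card {a, b, c, d} \<le> card S" using assms by (intro card_mono) auto
  ultimately show ?thesis by simp
qed

lemma not_in_span_outside:
  fixes B Y :: "real^3"
  assumes "subspace m" "B \<in> m" "B \<noteq> 0" "Y \<notin> m"
  shows "B \<notin> span {Y}"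
proof -
  have "span {B} \<subseteq> m" using assms by (intro span_minimal) auto
  then have "Y \<notin> span {B}" using assms by blast
  then show ?thesis using indep_sym(2)[OF assms(3)] by blast
qed

lemma S1:
  fixes V :: "(real^3) set"
  assumes fin: "finite V" and m: "subspace m" "dim m \<le> 2"
    and B: "B1 \<in> m" "B2 \<in> m" "B3 \<in> m" "B4 \<in> m"
    and gps: "gp V g B1 B2" "gp V g B1 B3" "gp V g B1 B4" "gp V g B2 B3" "gp V g B2 B4" "gp V g B3 B4"
    and Y: "Y \<in> V" "Y \<notin> m"
  shows "4 \<le> card (Pl V Y)"
proof -
  have inV: "B1 \<in> V" "B2 \<in> V" "B3 \<in> V" "B4 \<in> V" using gps unfolding gp_def by auto
  have nz: "B1 \<noteq> 0" "B2 \<noteq> 0" "B3 \<noteq> 0" "B4 \<noteq> 0"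
    using gps gp_nz gp_sym by blast+
  have inPl: "span {Y, B} \<in> Pl V Y" if "B \<in> m" "B \<noteq> 0" "B \<in> V" for B
    unfolding Pl_def using not_in_span_outside[OF m(1) that(1,2) Y(2)] that by blast
  have dist: "span {Y, B} \<noteq> span {Y, B'}" if "B \<in> m" "B' \<in> m" "gp V g B B'" for B B'
  proof
    assume eq: "span {Y, B} = span {Y, B'}"
    have b1: "B \<in> span {Y, B}" by (auto intro: span_base)
    have b2: "B' \<in> span {Y, B}" unfolding eq by (auto intro: span_base)
    have "span {Y, B} = m"
      by (rule same_plane[OF subspace_span dim_span2 m b1 b2 that(1) that(2) gp_nz[OF that(3)] gp_ind[OF that(3)]])
    then show False using Y(2) span_base by blast
  qed
  show ?thesis
    using card4[of "Pl V Y" "span {Y, B1}" "span {Y, B2}" "span {Y, B3}" "span {Y, B4}"]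
      inPl B nz inV dist gps fin unfolding Pl_def by simp
qed



lemma comb_logic:
  fixes a b c d :: 'a
  assumes "a = b \<or> a = c \<or> b = c" "a = b \<or> a = d \<or> b = d" "a = c \<or> a = d \<or> c = d" "b = c \<or> b = d \<or> c = d"
    "\<not> (a = b \<and> a = c)" "\<not> (a = b \<and> a = d)" "\<not> (a = c \<and> a = d)" "\<not> (b = c \<and> b = d)"
    "\<not> (a = b \<and> c = d \<and> a \<noteq> c)" "\<not> (a = c \<and> b = d \<and> a \<noteq> b)" "\<not> (a = d \<and> b = c \<and> a \<noteq> b)"
  shows False
  using assms by metis

lemma five_elems:
  assumes "finite S" "5 \<le> card S"
  shows "\<exists>a b c d e. a \<in> S \<and> b \<in> S \<and> c \<in> S \<and> d \<in> S \<and> e \<in> S \<and> distinct [a, b, c, d, e]"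
proof -
  obtain T where T: "T \<subseteq> S" "card T = 5" using obtain_subset_with_card_n[OF assms(2)] by metis
  then have "card T = Suc (Suc (Suc (Suc (Suc 0))))" by simp
  then have "\<exists>a b c d e. T = {a, b, c, d, e} \<and> distinct [a, b, c, d, e]"
    unfolding card_Suc_eq by (elim exE conjE) (simp, blast)
  then obtain a b c d e where "T = {a, b, c, d, e}" "distinct [a, b, c, d, e]" by blast
  then show ?thesis using T by blast
qed

lemma gp_of_planes:
  fixes g X Y :: "real^3"
  assumes "g \<noteq> 0" "X \<in> V" "Y \<in> V" "X \<notin> span {g}" "Y \<notin> span {g}" "span {g, X} \<noteq> span {g, Y}"
  shows "gp V g X Y"
proof -
  have "Y \<notin> span {g, X}"
  proof
    assume Y: "Y \<in> span {g, X}"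
    have "g \<in> span {g, X}" by (auto intro: span_base)
    then have "span {g, X} = span {g, Y}"
      using plane_eq[OF subspace_span dim_span2 _ Y assms(1) assms(5)] by blast
    then show False using assms by simp
  qed
  moreover have "X \<notin> span {g, Y}"
  proof
    assume X: "X \<in> span {g, Y}"
    have "g \<in> span {g, Y}" by (auto intro: span_base)
    then have "span {g, Y} = span {g, X}"
      using plane_eq[OF subspace_span dim_span2 _ X assms(1) assms(4)] by blast
    then show False using assms by simp
  qed
  ultimately show ?thesis unfolding gp_def using assms by blast
qed

context
  fixes V :: "(real^3) set" and g :: "real^3"
  assumes fin: "finite V" and gV: "g \<in> V" and g0: "g \<noteq> 0"
    and H: "\<forall>h\<in>V. h \<notin> span {g} \<longrightarrow> card (Pl V h) \<le> 3"
begin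

lemma TL:
  assumes NP: "\<not> (\<exists>\<sigma>. subspace \<sigma> \<and> dim \<sigma> \<le> 2 \<and> g \<notin> \<sigma> \<and> (\<forall>v\<in>V. v \<notin> span {g} \<longrightarrow> v \<in> \<sigma>))"
    and gps: "gp V g A B" "gp V g A C" "gp V g A D" "gp V g B C" "gp V g B D" "gp V g C D"
    and eqs: "span {A, B} = span {A, C}" "span {A, B} = span {A, D}"
  shows False
proof -
  define m where "m = span {A, B}"
  have m: "subspace m" "dim m \<le> 2" unfolding m_def using dim_span2 by auto
  have inm: "A \<in> m" "B \<in> m" "C \<in> m" "D \<in> m" unfolding m_def using eqs by (auto intro: span_base)
  show False
  proof (cases "\<exists>Y\<in>V. Y \<notin> span {g} \<and> Y \<notin> m")
    case True
    then obtain Y where Y: "Y \<in> V" "Y \<notin> span {g}" "Y \<notin> m" by blast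
    have "4 \<le> card (Pl V Y)" using S1[OF fin m inm gps Y(1) Y(3)] .
    then show False using H Y by force
  next
    case False
    have "g \<notin> m"
    proof
      assume "g \<in> m"
      have "A \<notin> span {g}" using gps unfolding gp_def by blast
      then have "m = span {g, A}" using plane_eq[OF m \<open>g \<in> m\<close> inm(1) g0] by blast
      then show False using inm(2) gps(1) unfolding gp_def by blast
    qed
    then show False using NP m False by blast
  qed
qed

lemma TT:
  assumes gps: "gp V g A B" "gp V g A C" "gp V g A D" "gp V g A E"
      "gp V g B C" "gp V g B D" "gp V g B E" "gp V g C D" "gp V g C E" "gp V g D E"
    and eqs: "span {A, B} = span {A, C}" "span {A, D} = span {A, E}" "span {A, B} \<noteq> span {A, D}"
  shows False
proof -
  have BV: "B \<in> V" "B \<notin> span {g}" using gps unfolding gp_def by auto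
  have B0: "B \<noteq> 0" using gp_nz gp_sym gps by blast
  have A0: "A \<noteq> 0" using gp_nz gps by blast
  have D0: "D \<noteq> 0" using gp_nz gps by blast
  have gB: "g \<notin> span {B}" using indep_sym(2)[OF g0 BV(2)] .
  have inPl: "span {B, X} \<in> Pl V B" if "X \<in> V" "X \<notin> span {B}" for X
    unfolding Pl_def using that by blast
  have AB: "A \<notin> span {B}" using gp_ind[OF gp_sym[OF gps(1)]] .
  have DB: "D \<notin> span {B}" using gp_ind[OF gps(6)] .
  have EB: "E \<notin> span {B}" using gp_ind[OF gps(7)] .
  have XV: "A \<in> V" "D \<in> V" "E \<in> V" using gps unfolding gp_def by auto
  have q0: "span {B, g} = span {g, B}" by (simp add: insert_commute)
  have n0: "span {B, g} \<noteq> span {B, X}" if "X \<notin> span {g, B}" for X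
    using that q0 by (metis insertI1 insertI2 span_base singletonI)
  have nA: "A \<notin> span {g, B}" "D \<notin> span {g, B}" "E \<notin> span {g, B}"
    using gps unfolding gp_def by auto
  define m1 where "m1 = span {A, B}"
  define m2 where "m2 = span {A, D}"
  have q1: "span {B, A} = m1" unfolding m1_def by (simp add: insert_commute)
  have sm1: "subspace m1" "dim m1 \<le> 2" unfolding m1_def using dim_span2[of A B] by auto
  have sm2: "subspace m2" "dim m2 \<le> 2" unfolding m2_def using dim_span2[of A D] by auto
  have Am1: "A \<in> m1" and Bm1: "B \<in> m1" unfolding m1_def by (auto intro: span_base)
  have Am2: "A \<in> m2" and Dm2: "D \<in> m2" unfolding m2_def by (auto intro: span_base)
  have Em2: "E \<in> m2" unfolding m2_def eqs(2) by (auto intro: span_base)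
  have m12: "m1 \<noteq> m2" using eqs(3) unfolding m1_def m2_def .
  have Dm1: "D \<notin> m1"
  proof
    assume "D \<in> m1"
    then have "m1 = m2" by (rule same_plane[OF sm1 sm2 Am1 _ Am2 Dm2 A0 gp_ind[OF gps(3)]])
    then show False using m12 by simp
  qed
  have Em1: "E \<notin> m1"
  proof
    assume "E \<in> m1"
    then have "m1 = m2" by (rule same_plane[OF sm1 sm2 Am1 _ Am2 Em2 A0 gp_ind[OF gps(4)]])
    then show False using m12 by simp
  qed
  have n12: "span {B, A} \<noteq> span {B, D}" using Dm1 q1 by (metis insertI1 insertI2 span_base singletonI)
  have n13: "span {B, A} \<noteq> span {B, E}" using Em1 q1 by (metis insertI1 insertI2 span_base singletonI)
  have n23: "span {B, D} \<noteq> span {B, E}"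
  proof
    assume eq: "span {B, D} = span {B, E}"
    have Dq: "D \<in> span {B, D}" by (auto intro: span_base)
    have Eq: "E \<in> span {B, D}" unfolding eq by (auto intro: span_base)
    have "span {B, D} = m2"
      by (rule same_plane[OF subspace_span dim_span2 sm2 Dq Eq Dm2 Em2 D0 gp_ind[OF gps(10)]])
    then have Bm2: "B \<in> m2" by (auto intro: span_base)
    have "m2 = m1" by (rule same_plane[OF sm2 sm1 Am2 Bm2 Am1 Bm1 A0 gp_ind[OF gps(1)]])
    then show False using m12 by simp
  qed
  have "4 \<le> card (Pl V B)"
    using card4[of "Pl V B" "span {B, g}" "span {B, A}" "span {B, D}" "span {B, E}"]
      inPl[OF gV gB] inPl[OF XV(1) AB] inPl[OF XV(2) DB] inPl[OF XV(3) EB]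
      n0[OF nA(1)] n0[OF nA(2)] n0[OF nA(3)] n12 n13 n23 fin unfolding Pl_def by simp
  then show False using H BV by force
qed

lemma PH:
  assumes gps: "gp V g A X" "gp V g A Y" "gp V g A Z"
  shows "span {A, X} = span {A, Y} \<or> span {A, X} = span {A, Z} \<or> span {A, Y} = span {A, Z}"
proof (rule ccontr)
  assume ne: "\<not> ?thesis"
  have AV: "A \<in> V" "A \<notin> span {g}" using gps unfolding gp_def by auto
  have gA: "g \<notin> span {A}" using indep_sym(2)[OF g0 AV(2)] .
  have inPl: "span {A, W} \<in> Pl V A" if "W \<in> V" "W \<notin> span {A}" for W
    unfolding Pl_def using that by blast
  have WV: "X \<in> V" "Y \<in> V" "Z \<in> V" using gps unfolding gp_def by auto
  have q0: "span {A, g} = span {g, A}" by (simp add: insert_commute)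
  have n0: "span {A, g} \<noteq> span {A, W}" if "W \<notin> span {g, A}" for W
    using that q0 by (metis insertI1 insertI2 span_base singletonI)
  have nW: "X \<notin> span {g, A}" "Y \<notin> span {g, A}" "Z \<notin> span {g, A}"
    using gps unfolding gp_def by auto
  have "4 \<le> card (Pl V A)"
    using card4[of "Pl V A" "span {A, g}" "span {A, X}" "span {A, Y}" "span {A, Z}"]
      inPl[OF gV gA] inPl[OF WV(1) gp_ind[OF gps(1)]] inPl[OF WV(2) gp_ind[OF gps(2)]] inPl[OF WV(3) gp_ind[OF gps(3)]]
      n0[OF nW(1)] n0[OF nW(2)] n0[OF nW(3)] ne fin unfolding Pl_def by simp
  then show False using H AV by force
qed


lemma comb:
  assumes NP: "\<not> (\<exists>\<sigma>. subspace \<sigma> \<and> dim \<sigma> \<le> 2 \<and> g \<notin> \<sigma> \<and> (\<forall>v\<in>V. v \<notin> span {g} \<longrightarrow> v \<in> \<sigma>))"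
    and c5: "5 \<le> card (Pl V g)"
  shows False
proof -
  have finPl: "finite (Pl V g)" unfolding Pl_def using fin by simp
  obtain p1 p2 p3 p4 p5 where ps: "p1 \<in> Pl V g" "p2 \<in> Pl V g" "p3 \<in> Pl V g" "p4 \<in> Pl V g" "p5 \<in> Pl V g"
    "distinct [p1, p2, p3, p4, p5]"
    using five_elems[OF finPl c5] by blast
  have rep: "\<exists>X. X \<in> V \<and> X \<notin> span {g} \<and> p = span {g, X}" if "p \<in> Pl V g" for p
    using that unfolding Pl_def by blast
  obtain A1 where A1: "A1 \<in> V" "A1 \<notin> span {g}" "p1 = span {g, A1}" using rep[OF ps(1)] by blast
  obtain A2 where A2: "A2 \<in> V" "A2 \<notin> span {g}" "p2 = span {g, A2}" using rep[OF ps(2)] by blast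
  obtain A3 where A3: "A3 \<in> V" "A3 \<notin> span {g}" "p3 = span {g, A3}" using rep[OF ps(3)] by blast
  obtain A4 where A4: "A4 \<in> V" "A4 \<notin> span {g}" "p4 = span {g, A4}" using rep[OF ps(4)] by blast
  obtain A5 where A5: "A5 \<in> V" "A5 \<notin> span {g}" "p5 = span {g, A5}" using rep[OF ps(5)] by blast
  have G: "gp V g A1 A2" "gp V g A1 A3" "gp V g A1 A4" "gp V g A1 A5"
    "gp V g A2 A3" "gp V g A2 A4" "gp V g A2 A5" "gp V g A3 A4" "gp V g A3 A5" "gp V g A4 A5"
    using gp_of_planes[OF g0] A1 A2 A3 A4 A5 ps(6) by auto
  have G': "gp V g A2 A1" "gp V g A3 A1" "gp V g A4 A1" "gp V g A5 A1"
    "gp V g A3 A2" "gp V g A4 A2" "gp V g A5 A2" "gp V g A4 A3" "gp V g A5 A3" "gp V g A5 A4"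
    using G gp_sym by blast+
  note GG = G G'
  show False
  proof (rule comb_logic[of "span {A1, A2}" "span {A1, A3}" "span {A1, A4}" "span {A1, A5}"])
    show "span {A1, A2} = span {A1, A3} \<or> span {A1, A2} = span {A1, A4} \<or> span {A1, A3} = span {A1, A4}"
      using PH GG by blast
    show "span {A1, A2} = span {A1, A3} \<or> span {A1, A2} = span {A1, A5} \<or> span {A1, A3} = span {A1, A5}"
      using PH GG by blast
    show "span {A1, A2} = span {A1, A4} \<or> span {A1, A2} = span {A1, A5} \<or> span {A1, A4} = span {A1, A5}"
      using PH GG by blast
    show "span {A1, A3} = span {A1, A4} \<or> span {A1, A3} = span {A1, A5} \<or> span {A1, A4} = span {A1, A5}"
      using PH GG by blast
    show "\<not> (span {A1, A2} = span {A1, A3} \<and> span {A1, A2} = span {A1, A4})"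
      using TL[OF NP, of A1 A2 A3 A4] GG by blast
    show "\<not> (span {A1, A2} = span {A1, A3} \<and> span {A1, A2} = span {A1, A5})"
      using TL[OF NP, of A1 A2 A3 A5] GG by blast
    show "\<not> (span {A1, A2} = span {A1, A4} \<and> span {A1, A2} = span {A1, A5})"
      using TL[OF NP, of A1 A2 A4 A5] GG by blast
    show "\<not> (span {A1, A3} = span {A1, A4} \<and> span {A1, A3} = span {A1, A5})"
      using TL[OF NP, of A1 A3 A4 A5] GG by blast
    show "\<not> (span {A1, A2} = span {A1, A3} \<and> span {A1, A4} = span {A1, A5} \<and> span {A1, A2} \<noteq> span {A1, A4})"
      using TT[of A1 A2 A3 A4 A5] GG by blast
    show "\<not> (span {A1, A2} = span {A1, A4} \<and> span {A1, A3} = span {A1, A5} \<and> span {A1, A2} \<noteq> span {A1, A3})"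
      using TT[of A1 A2 A4 A3 A5] GG by blast
    show "\<not> (span {A1, A2} = span {A1, A5} \<and> span {A1, A3} = span {A1, A4} \<and> span {A1, A2} \<noteq> span {A1, A3})"
      using TT[of A1 A2 A5 A3 A4] GG by blast
  qed
qed

end



lemma Wsp_zero: "Wsp vs 0 = span (set vs)"
  unfolding Wsp_def by simp

lemma aff_dim_ZS: "aff_dim (ZS z0 vs) = int (dim (span (set vs)))"
  using aff_dim_fc[of z0 vs 0] fc_zero Wsp_zero by simp

lemma dirspace_ZS: "dirspace (ZS z0 vs) = span (set vs)"
  using dirspace_fc[of z0 vs 0] fc_zero Wsp_zero by simp

lemma seg_sum:
  fixes x y g :: "real^3"
  assumes "m \<ge> 0" "l \<ge> 0"
  shows "closed_segment x (x + m *\<^sub>R g) + closed_segment y (y + l *\<^sub>R g)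
       = closed_segment (x + y) (x + y + (m + l) *\<^sub>R g)"
proof (rule set_eqI, rule iffI)
  fix z assume "z \<in> closed_segment x (x + m *\<^sub>R g) + closed_segment y (y + l *\<^sub>R g)"
  then obtain u w where u: "0 \<le> u" "u \<le> 1" and w: "0 \<le> w" "w \<le> 1"
    and z: "z = (x + u *\<^sub>R (m *\<^sub>R g)) + (y + w *\<^sub>R (l *\<^sub>R g))"
    unfolding closed_segment_alt set_plus_def by auto
  show "z \<in> closed_segment (x + y) (x + y + (m + l) *\<^sub>R g)"
  proof (cases "m + l = 0")
    case True
    then have "m = 0" "l = 0" using assms by auto
    then show ?thesis using z by simp
  next
    case False
    then have ml: "m + l > 0" using assms by simp
    define r where "r = (u * m + w * l) / (m + l)"
    have "u * m \<le> m" "w * l \<le> l" using u w assms by (auto simp: mult_left_le_one_le)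
    then have r: "0 \<le> r" "r \<le> 1" unfolding r_def using ml u w assms by (auto simp: divide_simps)
    have "r * (m + l) = u * m + w * l" unfolding r_def using ml by simp
    moreover have "z = (x + y) + (u * m + w * l) *\<^sub>R g"
      unfolding z by (simp add: algebra_simps)
    ultimately have "z = (x + y) + r *\<^sub>R ((m + l) *\<^sub>R g)"
      by simp
    then show ?thesis unfolding closed_segment_alt using r by auto
  qed
next
  fix z assume "z \<in> closed_segment (x + y) (x + y + (m + l) *\<^sub>R g)"
  then obtain r where r: "0 \<le> r" "r \<le> 1" and z: "z = (x + y) + r *\<^sub>R ((m + l) *\<^sub>R g)"
    unfolding closed_segment_alt by auto
  have "z = (x + r *\<^sub>R (m *\<^sub>R g)) + (y + r *\<^sub>R (l *\<^sub>R g))"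
    unfolding z by (simp add: algebra_simps)
  moreover have "x + r *\<^sub>R (m *\<^sub>R g) \<in> closed_segment x (x + m *\<^sub>R g)"
    unfolding closed_segment_alt using r by auto
  moreover have "y + r *\<^sub>R (l *\<^sub>R g) \<in> closed_segment y (y + l *\<^sub>R g)"
    unfolding closed_segment_alt using r by auto
  ultimately show "z \<in> closed_segment x (x + m *\<^sub>R g) + closed_segment y (y + l *\<^sub>R g)"
    unfolding set_plus_def by blast
qed

lemma coll_segsum:
  fixes g :: "real^3"
  assumes "\<forall>(a,b)\<in>set segs. b - a \<in> span {g}"
  shows "\<exists>p l. l \<ge> 0 \<and> segsum segs = closed_segment p (p + l *\<^sub>R g)
              \<and> ((\<exists>(a,b)\<in>set segs. b \<noteq> a) \<longrightarrow> l > 0)"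
  using assms
proof (induction segs)
  case Nil
  show ?case by (rule exI[of _ 0], rule exI[of _ 0]) (simp add: segsum_Nil)
next
  case (Cons s segs)
  obtain a b where s: "s = (a, b)" by fastforce
  obtain p l where pl: "l \<ge> 0" "segsum segs = closed_segment p (p + l *\<^sub>R g)"
    "(\<exists>(a,b)\<in>set segs. b \<noteq> a) \<longrightarrow> l > 0" using Cons by auto
  have "b - a \<in> span {g}" using Cons.prems s by auto
  then obtain k where k: "b - a = k *\<^sub>R g" by (auto simp: span_singleton)
  define a' where "a' = (if k \<ge> 0 then a else b)"
  have seg: "closed_segment a b = closed_segment a' (a' + \<bar>k\<bar> *\<^sub>R g)"
  proof (cases "k \<ge> 0")
    case True
    then have "b = a + \<bar>k\<bar> *\<^sub>R g" using k by (simp add: algebra_simps)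
    then show ?thesis unfolding a'_def using True by simp
  next
    case False
    then have "a = b + \<bar>k\<bar> *\<^sub>R g" using k by (simp add: algebra_simps)
    then show ?thesis unfolding a'_def using False by (simp add: closed_segment_commute)
  qed
  have "segsum (s # segs) = closed_segment (a' + p) (a' + p + (\<bar>k\<bar> + l) *\<^sub>R g)"
    unfolding s segsum_Cons seg pl(2) by (rule seg_sum) (use pl in auto)
  moreover have "(\<exists>(a,b)\<in>set (s # segs). b \<noteq> a) \<longrightarrow> \<bar>k\<bar> + l > 0"
  proof
    assume "\<exists>(a,b)\<in>set (s # segs). b \<noteq> a"
    then consider "b \<noteq> a" | "\<exists>(a,b)\<in>set segs. b \<noteq> a" using s by auto
    then show "\<bar>k\<bar> + l > 0"
    proof cases
      case 1
      then have "k \<noteq> 0" using k by auto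
      then show ?thesis using pl(1) by simp
    next
      case 2
      then show ?thesis using pl by simp
    qed
  qed
  ultimately show ?case using pl(1) by (intro exI[of _ "a' + p"] exI[of _ "\<bar>k\<bar> + l"]) auto
qed



lemma prism_of:
  fixes segs :: "((real^3) \<times> (real^3)) list" and g :: "real^3"
  assumes dim3: "aff_dim (segsum segs) = 3"
    and gin: "g \<in> set (map (\<lambda>(a,b). b - a) segs)" and g0: "g \<noteq> 0"
    and sig: "subspace \<sigma>" "dim \<sigma> \<le> 2" "g \<notin> \<sigma>"
    and all: "\<forall>v\<in>set (map (\<lambda>(a,b). b - a) segs). v \<notin> span {g} \<longrightarrow> v \<in> \<sigma>"
  shows "prism (segsum segs)"
proof -
  define par where "par = (\<lambda>(a::real^3,b::real^3). b - a \<in> span {g})"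
  define fp where "fp = filter par segs"
  define fn where "fn = filter (\<lambda>x. \<not> par x) segs"
  have Peq: "segsum segs = segsum fp + segsum fn"
    unfolding fp_def fn_def by (rule segsum_filter)
  have "\<forall>(a,b)\<in>set fp. b - a \<in> span {g}" unfolding fp_def par_def by auto
  then obtain p l where pl: "l \<ge> 0" "segsum fp = closed_segment p (p + l *\<^sub>R g)"
    "(\<exists>(a,b)\<in>set fp. b \<noteq> a) \<longrightarrow> l > 0" using coll_segsum by blast
  obtain a0 b0 where ab0: "(a0, b0) \<in> set segs" "g = b0 - a0" using gin by auto
  have "(a0, b0) \<in> set fp" unfolding fp_def par_def using ab0 by (auto intro: span_base)
  moreover have "b0 \<noteq> a0" using ab0 g0 by auto
  ultimately have l0: "l > 0" using pl(3) by blast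
  define vsn where "vsn = map (\<lambda>(a,b). b - a) fn"
  define Q where "Q = segsum fn"
  have polyQ: "polytope Q" unfolding Q_def by (rule polytope_segsum)
  have QZ: "Q = ZS (sum_list (map fst fn)) vsn" unfolding Q_def vsn_def by (rule segsum_ZS)
  have dQ: "dirspace Q = span (set vsn)" unfolding QZ by (rule dirspace_ZS)
  have vsn_sig: "set vsn \<subseteq> \<sigma>"
  proof
    fix v assume "v \<in> set vsn"
    then obtain a b where ab: "(a, b) \<in> set segs" "\<not> par (a, b)" "v = b - a"
      unfolding vsn_def fn_def by auto
    then have "v \<notin> span {g}" "v \<in> set (map (\<lambda>(a,b). b - a) segs)" unfolding par_def by force+
    then show "v \<in> \<sigma>" using all by blast
  qed
  have dsub: "dirspace Q \<subseteq> \<sigma>" unfolding dQ using vsn_sig sig(1) by (rule span_minimal)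
  have le2: "dim (span (set vsn)) \<le> 2" using dim_subset[OF dsub] sig(2) dQ by simp
  have "aff_dim (segsum segs) = int (dim (span (set (map (\<lambda>(a,b). b - a) segs))))"
    by (simp only: segsum_ZS aff_dim_ZS)
  then have d3: "dim (span (set (map (\<lambda>(a,b). b - a) segs))) = 3" using dim3 by simp
  have "set (map (\<lambda>(a,b). b - a) segs) \<subseteq> span (insert g (set vsn))"
  proof
    fix v assume "v \<in> set (map (\<lambda>(a,b). b - a) segs)"
    then obtain a b where ab: "(a, b) \<in> set segs" "v = b - a" by auto
    show "v \<in> span (insert g (set vsn))"
    proof (cases "par (a, b)")
      case True
      then have "v \<in> span {g}" unfolding par_def using ab by simp
      moreover have "span {g} \<subseteq> span (insert g (set vsn))" by (rule span_mono) auto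
      ultimately show ?thesis by blast
    next
      case False
      then have "v \<in> set vsn" unfolding vsn_def fn_def using ab by force
      then show ?thesis by (auto intro: span_base)
    qed
  qed
  then have "span (set (map (\<lambda>(a,b). b - a) segs)) \<subseteq> span (insert g (set vsn))"
    by (rule span_minimal) simp
  then have "3 \<le> dim (span (insert g (set vsn)))" using dim_subset d3 by metis
  also have "\<dots> = dim (insert g (set vsn))" by simp
  also have "\<dots> \<le> dim (set vsn) + 1" by (simp add: dim_insert)
  finally have "dim (span (set vsn)) = 2" using le2 by simp
  then have affQ: "aff_dim Q = 2" unfolding QZ using aff_dim_ZS[of _ vsn] by simp
  have notin: "(p + l *\<^sub>R g) - p \<notin> dirspace Q"
  proof
    assume "(p + l *\<^sub>R g) - p \<in> dirspace Q"
    then have "l *\<^sub>R g \<in> \<sigma>" using dsub by auto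
    then have "(1 / l) *\<^sub>R (l *\<^sub>R g) \<in> \<sigma>" by (rule subspace_scale[OF sig(1)])
    then show False using l0 sig(3) by simp
  qed
  have "segsum segs = msum Q (closed_segment p (p + l *\<^sub>R g))"
    unfolding msum_eq Peq Q_def pl(2) by (simp add: add.commute)
  then show ?thesis unfolding prism_def using polyQ affQ notin by blast
qed



theorem lemma4p4:
  fixes P E :: "(real^3) set"
  assumes "zonotope P" and "aff_dim P = 3" and "\<not> prism P"
    and "E edge_of P" and "card (belt P E) = 10"
  shows "\<exists>M. M edge_of P \<and> \<not> parallel_sets E M \<and> card (belt P M) \<ge> 8"
proof -
  obtain segs where P: "P = segsum segs" using assms(1) unfolding zonotope_def by blast
  define vs where "vs = map (\<lambda>(a,b). b - a) segs"
  define z0 where "z0 = sum_list (map fst segs)"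
  have PZ: "P = ZS z0 vs" unfolding P vs_def z0_def by (rule segsum_ZS)
  have "polytope P" unfolding P by (rule polytope_segsum)
  then have polyP: "polytope (ZS z0 vs)" using PZ by simp
  have dim3: "aff_dim (ZS z0 vs) = 3" using assms(2) PZ by simp
  have EE: "E edge_of ZS z0 vs" using assms(4) PZ by simp
  obtain g where g: "g \<in> set vs" "g \<noteq> 0" "dirspace E = span {g}"
    using edge_dir[OF polyP dim3 EE] by blast
  have "card (belt (ZS z0 vs) E) \<le> 2 * card (Pl (set vs) g)"
    using belt_upper[OF polyP dim3 EE g] by blast
  then have c5: "5 \<le> card (Pl (set vs) g)" using assms(5) PZ by simp
  have NP: "\<not> (\<exists>\<sigma>. subspace \<sigma> \<and> dim \<sigma> \<le> 2 \<and> g \<notin> \<sigma> \<and> (\<forall>v\<in>set vs. v \<notin> span {g} \<longrightarrow> v \<in> \<sigma>))"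
  proof
    assume "\<exists>\<sigma>. subspace \<sigma> \<and> dim \<sigma> \<le> 2 \<and> g \<notin> \<sigma> \<and> (\<forall>v\<in>set vs. v \<notin> span {g} \<longrightarrow> v \<in> \<sigma>)"
    then obtain \<sigma> where s: "subspace \<sigma>" "dim \<sigma> \<le> 2" "g \<notin> \<sigma>" "\<forall>v\<in>set vs. v \<notin> span {g} \<longrightarrow> v \<in> \<sigma>"
      by blast
    have "prism (segsum segs)"
      using prism_of[of segs g \<sigma>] assms(2) P g s unfolding vs_def by blast
    then show False using assms(3) P by simp
  qed
  have "\<exists>h\<in>set vs. h \<notin> span {g} \<and> 4 \<le> card (Pl (set vs) h)"
  proof (rule ccontr)
    assume "\<not> ?thesis"
    then have H: "\<forall>h\<in>set vs. h \<notin> span {g} \<longrightarrow> card (Pl (set vs) h) \<le> 3" by force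
    show False using comb[OF _ g(1) g(2) H NP c5] by simp
  qed
  then obtain h where h: "h \<in> set vs" "h \<notin> span {g}" "4 \<le> card (Pl (set vs) h)" by blast
  have h0: "h \<noteq> 0" using h(2) span_zero by blast
  obtain M where M: "M edge_of ZS z0 vs" "dirspace M = span {h}" "2 * card (Pl (set vs) h) \<le> card (belt (ZS z0 vs) M)"
    using belt_lower[OF polyP dim3 h(1) h0] by blast
  have "\<not> parallel_sets E M"
  proof
    assume "parallel_sets E M"
    then have "span {g} = span {h}" using g(3) M(2) unfolding parallel_sets_def by simp
    then have "h \<in> span {g}" by (auto intro: span_base)
    then show False using h(2) by simp
  qed
  moreover have "card (belt P M) \<ge> 8" using M(3) h(3) PZ by simp
  ultimately show ?thesis using M(1) PZ by blast
qed


end
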